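(* Let $\varphi:\mathbb{R}^n\to(-\infty,\infty]$ be continuously prox-regular at $\bar x$ for $\bar v=0$ and satisfy $\varphi(x)\ge\varphi(\bar x)-\frac\rho2\|x-\bar x\|^2$ for all $x$ for some $\rho\ge0$, and let $\bar x$ be a tilt-stable local minimizer of $\varphi$ with modulus $\kappa>0$. Then for every sufficiently small $r>0$, $\bar x$ is a tilt-stable local minimizer of the Moreau envelope $e_r\varphi$ with modulus $\kappa+2r$.
   Context: Moreau envelope: $e_r\varphi(x)=\inf_w\{\varphi(w)+\frac1{2r}\|w-x\|^2\}$. Limiting subdifferential $\partial\varphi(\bar x)=\{v:(v,-1)\in N_{\operatorname{epi}\varphi}(\bar x,\varphi(\bar x))\}$, where $N_\Omega(\bar x)$ is the set of all limits of $v_k\in\widehat N_\Omega(x_k)$, $x_k\to\bar x$ in $\Omega$, and $\widehat N_\Omega(\bar x)=\{v:\limsup_{x\to\bar x,x\in\Omega}\langle v,x-\bar x\rangle/\|x-\bar x\|\le0\}$. Continuously prox-regular at $\bar x$ for $\bar v\in\partial\varphi(\bar x)$: $\varphi(\bar x)$ finite, $\varphi$ l.s.c. around $\bar x$, there are $\varepsilon>0,\rho'\ge0$ with $\varphi(x)\ge\varphi(u)+\langle v,x-u\rangle-\frac{\rho'}2\|x-u\|^2$ for all $x\in\mathbb B_\varepsilon(\bar x)$, $(u,v)\in\operatorname{gph}\partial\varphi\cap\mathbb B_\varepsilon(\bar x,\bar v)$, and $(x_k,v_k)\to(\bar x,\bar v)$ with $v_k\in\partial\varphi(x_k)$ implies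 $\varphi(x_k)\to\varphi(\bar x)$. $\bar x$ is a tilt-stable local minimizer of a function $\phi$ with modulus $\kappa$ if for some $\gamma>0$ the mapping $M_\gamma(v)=\operatorname{argmin}\{\phi(x)-\langle v,x\rangle:x\in\mathbb B_\gamma(\bar x)\}$ is single-valued and Lipschitz with constant $\kappa$ on a neighborhood of $0$, with $M_\gamma(0)=\{\bar x\}$. *)

theory Defs
  imports "HOL-Analysis.Analysis"
begin

definition lsc_at_pt :: "('a::topological_space \<Rightarrow> ereal) \<Rightarrow> 'a \<Rightarrow> bool" where
  "lsc_at_pt f x \<longleftrightarrow> (\<forall>y < f x. eventually (\<lambda>z. y < f z) (at x))"

text \<open>Regular (Frechet) normal cone: limsup of inner v (x - xbar) / norm (x - xbar) is \<open>\<le> 0\<close>.\<close>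
definition regular_normal_cone :: "'b::real_inner set \<Rightarrow> 'b \<Rightarrow> 'b set" where
  "regular_normal_cone \<Omega> xb = {v. xb \<in> \<Omega> \<and>
     (\<forall>e>0. \<exists>d>0. \<forall>x\<in>\<Omega>. norm (x - xb) < d \<longrightarrow> inner v (x - xb) \<le> e * norm (x - xb))}"

definition limiting_normal_cone :: "'b::real_inner set \<Rightarrow> 'b \<Rightarrow> 'b set" where
  "limiting_normal_cone \<Omega> xb = {v. xb \<in> \<Omega> \<and> (\<exists>xs vs. (\<forall>k. xs k \<in> \<Omega> \<and> vs k \<in> regular_normal_cone \<Omega> (xs k))
        \<and> xs \<longlonglongrightarrow> xb \<and> vs \<longlonglongrightarrow> v)}"

definition epigraph :: "('a \<Rightarrow> ereal) \<Rightarrow> ('a \<times> real) set" where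
  "epigraph f = {(x, a). f x \<le> ereal a}"

definition limiting_subdiff :: "('a::euclidean_space \<Rightarrow> ereal) \<Rightarrow> 'a \<Rightarrow> 'a set" where
  "limiting_subdiff f x = {v. f x \<noteq> \<infinity> \<and> f x \<noteq> -\<infinity> \<and>
      (v, -1) \<in> limiting_normal_cone (epigraph f) (x, real_of_ereal (f x))}"

definition cont_prox_regular :: "('a::euclidean_space \<Rightarrow> ereal) \<Rightarrow> 'a \<Rightarrow> 'a \<Rightarrow> bool" where
  "cont_prox_regular f xb vb \<longleftrightarrow>
     f xb \<noteq> \<infinity> \<and> f xb \<noteq> -\<infinity> \<and> vb \<in> limiting_subdiff f xb \<and>
     (\<exists>U. open U \<and> xb \<in> U \<and> (\<forall>x\<in>U. lsc_at_pt f x)) \<and>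
     (\<exists>e>0. \<exists>\<rho>'\<ge>0. \<forall>x\<in>ball xb e. \<forall>u v. v \<in> limiting_subdiff f u \<and> (u, v) \<in> ball (xb, vb) e \<longrightarrow>
         f x \<ge> f u + ereal (inner v (x - u) - \<rho>' / 2 * (norm (x - u))\<^sup>2)) \<and>
     (\<forall>xs vs. (\<forall>k. vs k \<in> limiting_subdiff f (xs k)) \<and> xs \<longlonglongrightarrow> xb \<and> vs \<longlonglongrightarrow> vb
         \<longrightarrow> (\<lambda>k. f (xs k)) \<longlonglongrightarrow> f xb)"

definition tilt_argmin :: "('a::euclidean_space \<Rightarrow> ereal) \<Rightarrow> 'a \<Rightarrow> real \<Rightarrow> 'a \<Rightarrow> 'a set" where
  "tilt_argmin f xb \<gamma> v = {x \<in> cball xb \<gamma>. \<forall>y \<in> cball xb \<gamma>.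
       f x - ereal (inner v x) \<le> f y - ereal (inner v y)}"

definition tilt_stable :: "('a::euclidean_space \<Rightarrow> ereal) \<Rightarrow> 'a \<Rightarrow> real \<Rightarrow> bool" where
  "tilt_stable f xb \<kappa> \<longleftrightarrow> (\<exists>\<gamma>>0. tilt_argmin f xb \<gamma> 0 = {xb} \<and>
     (\<exists>\<delta>>0. \<exists>m. (\<forall>v\<in>ball 0 \<delta>. tilt_argmin f xb \<gamma> v = {m v}) \<and> \<kappa>-lipschitz_on (ball 0 \<delta>) m))"

definition moreau_env :: "real \<Rightarrow> ('a::euclidean_space \<Rightarrow> ereal) \<Rightarrow> 'a \<Rightarrow> ereal" where
  "moreau_env r f x = (INF w. f w + ereal (1 / (2 * r) * (norm (w - x))\<^sup>2))"

end

theory Submission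
  imports Defs
begin

lemma lsc_nhds:
  assumes "lsc_at_pt f l" "ereal y < f l"
  shows "eventually (\<lambda>z. ereal y < f z) (nhds l)"
proof -
  have "eventually (\<lambda>z. ereal y < f z) (at l)" using assms unfolding lsc_at_pt_def by blast
  then have "eventually (\<lambda>z. z \<noteq> l \<longrightarrow> ereal y < f z) (nhds l)"
    by (simp add: eventually_at_filter)
  then show ?thesis by (rule eventually_mono) (use assms(2) in auto)
qed

lemma lsc_compact_margin:
  fixes f :: "'a::euclidean_space \<Rightarrow> ereal" and g :: "'a \<Rightarrow> real"
  assumes K: "compact K" and lsc: "\<forall>w\<in>K. lsc_at_pt f w" and gc: "continuous_on UNIV g"
    and strict: "\<forall>w\<in>K. ereal T < f w + ereal (g w)"
  shows "\<exists>c>0. \<forall>w\<in>K. ereal (T + c) \<le> f w + ereal (g w)"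
proof (rule ccontr)
  assume neg: "\<not> ?thesis"
  have "\<exists>w\<in>K. f w + ereal (g w) < ereal (T + inverse (real (Suc k)))" for k
  proof -
    have "inverse (real (Suc k)) > 0" by simp
    then have "\<not> (\<forall>w\<in>K. ereal (T + inverse (real (Suc k))) \<le> f w + ereal (g w))"
      using neg by blast
    then show ?thesis by (auto simp: not_le)
  qed
  then have "\<forall>k. \<exists>w\<in>K. f w + ereal (g w) < ereal (T + inverse (real (Suc k)))" by blast
  then obtain ws where ws: "\<And>k. ws k \<in> K" "\<And>k. f (ws k) + ereal (g (ws k)) < ereal (T + inverse (real (Suc k)))"
    by (metis (no_types))
  obtain l s where l: "l \<in> K" "strict_mono s" "(ws \<circ> s) \<longlonglongrightarrow> l"
    using seq_compactE[OF compact_imp_seq_compact[OF K], of ws] ws(1) by blast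
  define b where "b k = T + inverse (real (Suc (s k))) - g (ws (s k))" for k
  have gl: "(\<lambda>k. g ((ws \<circ> s) k)) \<longlonglongrightarrow> g l"
    using continuous_on_tendsto_compose[OF gc l(3)] by simp
  have il: "(\<lambda>k. inverse (real (Suc (s k)))) \<longlonglongrightarrow> 0"
    using LIMSEQ_subseq_LIMSEQ[OF LIMSEQ_inverse_real_of_nat l(2)] by (simp add: o_def)
  have bl: "b \<longlonglongrightarrow> T - g l"
    unfolding b_def using tendsto_diff[OF tendsto_add[OF tendsto_const il] gl, of T] by (simp add: o_def)
  have "ereal T < f l + ereal (g l)" using strict l(1) by blast
  then have "ereal (T - g l) < f l" by (cases "f l") auto
  then obtain y where y: "ereal (T - g l) < ereal y" "ereal y < f l" using ereal_dense2 by blast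
  have e1: "eventually (\<lambda>k. b k < y) sequentially"
    using order_tendstoD(2)[OF bl] y(1) by simp
  have "eventually (\<lambda>z. ereal y < f z) (nhds l)" using lsc_nhds[of f l y] lsc l(1) y(2) by blast
  then have e2: "eventually (\<lambda>k. ereal y < f ((ws \<circ> s) k)) sequentially"
    using l(3) by (rule eventually_compose_filterlim)
  obtain k where k: "b k < y" "ereal y < f (ws (s k))"
    using eventually_happens[OF eventually_conj[OF e1 e2]] by auto
  have "f (ws (s k)) < ereal (b k)" using ws(2)[of "s k"] unfolding b_def
    by (cases "f (ws (s k))") auto
  then have "ereal y < ereal (b k)" using k(2) by (meson less_trans)
  with k(1) show False by simp
qed

lemma quad_id:
  fixes x w v :: "'a::real_inner" assumes "r > 0"
  shows "1/(2*r) * (norm (w - x))\<^sup>2 = 1/(2*r) * (norm (x - w - r *\<^sub>R v))\<^sup>2 + inner v (x - w) - r/2 * (norm v)\<^sup>2"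
proof -
  have "(norm (x - w - r *\<^sub>R v))\<^sup>2 = (norm (w-x))\<^sup>2 - 2*r*inner v (x-w) + r\<^sup>2 * (norm v)\<^sup>2"
    unfolding power2_norm_eq_inner
    by (simp add: inner_diff_left inner_diff_right inner_commute algebra_simps power2_eq_square)
  then show ?thesis using assms by (simp add: field_simps power2_eq_square)
qed

lemma ereal_add_le_aux:
  assumes "c \<noteq> -\<infinity>" "ereal t \<le> c"
  shows "ereal (t + s) \<le> c + ereal s"
  using assms by (cases c) auto

theorem mainTheorem11:
  fixes \<phi> :: "'a::euclidean_space \<Rightarrow> ereal" and xb :: 'a and \<rho> \<kappa> :: real
  assumes "\<forall>x. \<phi> x \<noteq> -\<infinity>"
    and "cont_prox_regular \<phi> xb 0"
    and "\<rho> \<ge> 0"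
    and "\<forall>x. \<phi> x \<ge> \<phi> xb - ereal (\<rho> / 2 * (norm (x - xb))\<^sup>2)"
    and "\<kappa> > 0"
    and "tilt_stable \<phi> xb \<kappa>"
  shows "\<exists>r0>0. \<forall>r. 0 < r \<and> r < r0 \<longrightarrow> tilt_stable (moreau_env r \<phi>) xb (\<kappa> + 2 * r)"
proof -
  note nminf = assms(1)
  from assms(6) obtain \<gamma> \<delta> m where \<gamma>: "\<gamma> > 0" and a0: "tilt_argmin \<phi> xb \<gamma> 0 = {xb}"
    and \<delta>: "\<delta> > 0" and mv: "\<forall>v\<in>ball 0 \<delta>. tilt_argmin \<phi> xb \<gamma> v = {m v}"
    and lip: "\<kappa>-lipschitz_on (ball 0 \<delta>) m"
    unfolding tilt_stable_def by blast
  from assms(2) obtain U where U: "open U" "xb \<in> U" "\<forall>x\<in>U. lsc_at_pt \<phi> x"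
    and finxb: "\<phi> xb \<noteq> \<infinity>" "\<phi> xb \<noteq> -\<infinity>"
    unfolding cont_prox_regular_def by blast
  obtain fx where fx: "\<phi> xb = ereal fx" using finxb by (cases "\<phi> xb") auto
  obtain e where e: "e > 0" "ball xb e \<subseteq> U" using U(1,2) openE by blast
  define R where "R = min (e/2) \<gamma>"
  have R: "R > 0" "R \<le> \<gamma>" using e \<gamma> by (auto simp: R_def)
  have cRU: "cball xb R \<subseteq> U" using e by (auto simp: R_def)
  have m0: "m 0 = xb" using mv a0 \<delta> by auto
  define r0 where "r0 = 1 / (8 * \<rho> + 1)"
  have r0: "r0 > 0" "r0 \<le> 1" using assms(3) by (auto simp: r0_def)
  show ?thesis
  proof (intro exI[of _ r0] conjI allI impI r0(1))
    fix r assume "0 < r \<and> r < r0"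
    then have r: "0 < r" "r < r0" by auto
    have r1: "r < 1" using r r0 by simp
    have r\<rho>: "8 * r * \<rho> \<le> 1"
    proof -
      have "r * (8 * \<rho> + 1) < 1" using r assms(3) by (simp add: r0_def field_simps)
      then show ?thesis using r by (simp add: algebra_simps)
    qed
    define \<gamma>' where "\<gamma>' = R / 2"
    define \<delta>' where "\<delta>' = min \<delta> (min (R/16) (R/(2*\<kappa>+2)))"
    have d4: "\<delta>' * (\<kappa> + 1) \<le> R/2"
    proof -
      have "\<delta>' \<le> R/(2*\<kappa>+2)" by (simp add: \<delta>'_def)
      then have "\<delta>' * (\<kappa> + 1) \<le> R/(2*\<kappa>+2) * (\<kappa> + 1)"
        using assms(5) by (intro mult_right_mono) auto
      also have "\<dots> = R/2" using assms(5) by (simp add: field_simps)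
      finally show ?thesis .
    qed
    have \<delta>': "\<delta>' > 0" "\<delta>' \<le> \<delta>" "\<delta>' \<le> R/16" "\<delta>' * (\<kappa> + 1) \<le> R/2"
    proof -
      show "\<delta>' \<le> \<delta>" unfolding \<delta>'_def by (rule min.cobounded1)
      show "\<delta>' \<le> R/16" unfolding \<delta>'_def by (meson min.cobounded1 min.cobounded2 order_trans)
      show "\<delta>' * (\<kappa> + 1) \<le> R/2" by (rule d4)
      show "\<delta>' > 0" using \<delta> R assms(5) unfolding \<delta>'_def by simp
    qed
    define M where "M v = m v + r *\<^sub>R v" for v
    define env where "env = moreau_env r \<phi>"
    have key: "tilt_argmin env xb \<gamma>' v = {M v}" if v: "v \<in> ball 0 \<delta>'" for v
    proof -
      have vd: "v \<in> ball 0 \<delta>" using v \<delta>' by auto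
      have nv: "norm v < \<delta>'" using v by simp
      have mva: "m v \<in> tilt_argmin \<phi> xb \<gamma> v" using mv vd by auto
      then have mvc: "m v \<in> cball xb \<gamma>" and mvmin: "\<forall>y\<in>cball xb \<gamma>. \<phi> (m v) - ereal (inner v (m v)) \<le> \<phi> y - ereal (inner v y)"
        unfolding tilt_argmin_def by auto
      have "\<phi> (m v) - ereal (inner v (m v)) \<le> \<phi> xb - ereal (inner v xb)" using mvmin \<gamma> by auto
      then have "\<phi> (m v) \<noteq> \<infinity>" using fx by auto
      then obtain p where p: "\<phi> (m v) = ereal p" using nminf by (cases "\<phi> (m v)") auto
      define h0 where "h0 = p - inner v (m v)"
      have F2: "h0 \<le> a - inner v w" if "w \<in> cball xb \<gamma>" "\<phi> w = ereal a" for w a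
      proof -
        have "\<phi> (m v) - ereal (inner v (m v)) \<le> \<phi> w - ereal (inner v w)" using mvmin that(1) by blast
        then show ?thesis using that(2) p unfolding h0_def by simp
      qed
      have F1: "h0 \<le> fx - inner v xb" using F2[of xb fx] \<gamma> fx by simp
      have F3: "w = m v" if "w \<in> cball xb \<gamma>" "\<phi> w = ereal a" "a - inner v w \<le> h0" for w a
      proof -
        have "w \<in> tilt_argmin \<phi> xb \<gamma> v" unfolding tilt_argmin_def
        proof (intro CollectI conjI ballI)
          show "w \<in> cball xb \<gamma>" by fact
          fix y assume "y \<in> cball xb \<gamma>"
          then have "\<phi> (m v) - ereal (inner v (m v)) \<le> \<phi> y - ereal (inner v y)" using mvmin by blast
          moreover have "\<phi> w - ereal (inner v w) \<le> \<phi> (m v) - ereal (inner v (m v))"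
            using that p unfolding h0_def by simp
          ultimately show "\<phi> w - ereal (inner v w) \<le> \<phi> y - ereal (inner v y)" by (rule order_trans[rotated])
        qed
        then show ?thesis using mv vd by auto
      qed
      have mdist: "norm (m v - xb) \<le> \<kappa> * norm v"
        using lipschitz_onD[OF lip, of v 0] vd \<delta> m0 by (simp add: dist_norm)
      have Mc: "M v \<in> cball xb \<gamma>'"
      proof -
        have "M v - xb = (m v - xb) + r *\<^sub>R v" by (simp add: M_def algebra_simps)
        then have "norm (M v - xb) \<le> norm (m v - xb) + norm (r *\<^sub>R v)"
          by (metis norm_triangle_ineq)
        then have "norm (M v - xb) \<le> norm (m v - xb) + r * norm v" using r by simp
        also have "\<dots> \<le> (\<kappa> + 1) * norm v" proof -
          have "r * norm v \<le> 1 * norm v" using r1 by (intro mult_right_mono) auto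
          then show ?thesis using mdist by (simp add: algebra_simps)
        qed
        also have "\<dots> \<le> (\<kappa> + 1) * \<delta>'" using nv assms(5) by simp
        also have "\<dots> \<le> \<gamma>'" using \<delta>'(4) unfolding \<gamma>'_def by (simp add: algebra_simps)
        finally show ?thesis by (simp add: dist_norm norm_minus_commute)
      qed
      define S where "S = h0 - r/2 * (norm v)\<^sup>2"
      have LB: "ereal (S + inner v x) \<le> env x"
        and SB: "x \<noteq> M v \<Longrightarrow> ereal (S + inner v x) < env x"
        if x: "x \<in> cball xb \<gamma>'" for x
      proof -
        define q where "q w = 1/(2*r) * (norm (w - x))\<^sup>2" for w
        have envx: "env x = (INF w. \<phi> w + ereal (q w))" unfolding env_def moreau_env_def q_def by simp
        have nx: "norm (x - xb) \<le> R/2" using x by (simp add: \<gamma>'_def dist_norm norm_minus_commute)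
        have inner_calc: "a + q w = (a - inner v w) + 1/(2*r) * (norm (x - w - r *\<^sub>R v))\<^sup>2 + inner v x - r/2 * (norm v)\<^sup>2" for a w
          unfolding q_def using quad_id[OF r(1), of w x v] by (simp add: inner_diff_right)
        have I1: "ereal (S + inner v x) \<le> \<phi> w + ereal (q w)" if "w \<in> cball xb R" for w
        proof (cases "\<phi> w")
          case (real a)
          have "h0 \<le> a - inner v w" using F2[OF _ real] that R by auto
          moreover have "0 \<le> 1/(2*r) * (norm (x - w - r *\<^sub>R v))\<^sup>2" using r by simp
          ultimately have "S + inner v x \<le> a + q w" using inner_calc[of a w] unfolding S_def by linarith
          then show ?thesis using real by simp
        qed (use nminf in auto)
        have I2: "ereal (S + inner v x) < \<phi> w + ereal (q w)" if "w \<in> cball xb R" "x \<noteq> M v" for w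
        proof (cases "\<phi> w")
          case (real a)
          have wg: "w \<in> cball xb \<gamma>" using that R by auto
          have h: "h0 \<le> a - inner v w" using F2[OF wg real] .
          show ?thesis
          proof (cases "x = w + r *\<^sub>R v")
            case True
            then have "w \<noteq> m v" using that(2) unfolding M_def by auto
            then have "h0 < a - inner v w" using F3[OF wg real] h by force
            moreover have "0 \<le> 1/(2*r) * (norm (x - w - r *\<^sub>R v))\<^sup>2" using r by simp
            ultimately have "S + inner v x < a + q w" using inner_calc[of a w] unfolding S_def by linarith
            then show ?thesis using real by simp
          next
            case False
            then have "x - w - r *\<^sub>R v \<noteq> 0" by (metis diff_add_cancel diff_diff_eq2 diff_zero add.commute)
            then have "norm (x - w - r *\<^sub>R v) > 0" by simp
            then have "0 < 1/(2*r) * (norm (x - w - r *\<^sub>R v))\<^sup>2" using r by simp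
            then have "S + inner v x < a + q w" using inner_calc[of a w] h unfolding S_def by linarith
            then show ?thesis using real by simp
          qed
        qed (use nminf in auto)
        have O: "ereal (S + inner v x + R\<^sup>2/32) \<le> \<phi> w + ereal (q w)" if "w \<notin> cball xb R" for w
        proof -
          define d where "d = norm (w - xb)"
          have dR: "d \<ge> R" using that by (simp add: d_def dist_norm norm_minus_commute)
          have "w - xb = (w - x) + (x - xb)" by simp
          then have "d \<le> norm (w - x) + norm (x - xb)" unfolding d_def by (metis norm_triangle_ineq)
          then have "norm (w - x) \<ge> d - norm (x - xb)" by simp
          then have wx: "norm (w - x) \<ge> d/2" using nx dR by simp
          have "(d/2)\<^sup>2 \<le> (norm (w - x))\<^sup>2" using wx dR R by (intro power_mono) auto
          then have qw: "q w \<ge> d\<^sup>2 / (8*r)" unfolding q_def using r by (simp add: field_simps power2_eq_square)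
          have "\<rho>/2 * d\<^sup>2 \<le> d\<^sup>2 / (16*r)"
          proof -
            have "\<rho>/2 \<le> 1/(16*r)" using r\<rho> r by (simp add: field_simps)
            then show ?thesis by (metis mult_right_mono zero_le_power2 times_divide_eq_left mult_1)
          qed
          then have "q w - \<rho>/2 * d\<^sup>2 \<ge> d\<^sup>2/(16*r)" using qw r by (simp add: field_simps)
          moreover have "d\<^sup>2/(16*r) \<ge> d\<^sup>2/16" using r r1 by (intro divide_left_mono) auto
          moreover have "d\<^sup>2 \<ge> R\<^sup>2" using dR R by (simp add: power_mono)
          ultimately have qq: "q w - \<rho>/2 * d\<^sup>2 \<ge> R\<^sup>2/16" by linarith
          have "inner v (x - xb) \<le> norm v * norm (x - xb)" by (rule norm_cauchy_schwarz)
          also have "\<dots> \<le> \<delta>' * (R/2)" using nv nx \<delta>'(1) by (intro mult_mono) auto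
          also have "\<dots> \<le> R\<^sup>2/32" using \<delta>'(3) R by (simp add: power2_eq_square field_simps)
          finally have iv: "inner v (x - xb) \<le> R\<^sup>2/32" .
          have "0 \<le> r/2 * (norm v)\<^sup>2" using r by simp
          then have Sle: "S \<le> fx - inner v xb" using F1 unfolding S_def by linarith
          have "S + inner v x + R\<^sup>2/32 \<le> (fx - \<rho>/2 * d\<^sup>2) + q w"
            using Sle iv qq by (simp add: inner_diff_right)
          moreover have "ereal (fx - \<rho>/2 * d\<^sup>2) \<le> \<phi> w" using assms(4) fx unfolding d_def by auto
          moreover have "ereal (fx - \<rho>/2 * d\<^sup>2 + q w) \<le> \<phi> w + ereal (q w)"
            using ereal_add_le_aux[of "\<phi> w" "fx - \<rho>/2 * d\<^sup>2" "q w"] nminf calculation(2) by blast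
          ultimately show ?thesis using order_trans ereal_less_eq(3) by blast
        qed
        have R32: "R\<^sup>2/32 > 0" using R by simp
        show "ereal (S + inner v x) \<le> env x" unfolding envx
        proof (rule INF_greatest)
          fix w show "ereal (S + inner v x) \<le> \<phi> w + ereal (q w)"
          proof (cases "w \<in> cball xb R")
            case False
            have "ereal (S + inner v x) \<le> ereal (S + inner v x + R\<^sup>2/32)" using R32 by simp
            then show ?thesis using O[OF False] by (rule order_trans)
          qed (rule I1)
        qed
        assume xM: "x \<noteq> M v"
        have qc: "continuous_on UNIV q" unfolding q_def by (intro continuous_intros)
        obtain c1 where c1: "c1 > 0" "\<forall>w\<in>cball xb R. ereal (S + inner v x + c1) \<le> \<phi> w + ereal (q w)"
          using lsc_compact_margin[OF compact_cball, of xb R \<phi> q "S + inner v x"] U(3) cRU qc I2 xM by blast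
        define c where "c = min c1 (R\<^sup>2/32)"
        have c: "c > 0" using c1 R32 by (simp add: c_def)
        have "ereal (S + inner v x + c) \<le> env x" unfolding envx
        proof (rule INF_greatest)
          fix w show "ereal (S + inner v x + c) \<le> \<phi> w + ereal (q w)"
          proof (cases "w \<in> cball xb R")
            case False
            have "S + inner v x + c \<le> S + inner v x + R\<^sup>2/32" by (simp add: c_def)
            then have "ereal (S + inner v x + c) \<le> ereal (S + inner v x + R\<^sup>2/32)" by simp
            then show ?thesis using O[OF False] by (rule order_trans)
          next
            case True
            have "S + inner v x + c \<le> S + inner v x + c1" by (simp add: c_def)
            then have "ereal (S + inner v x + c) \<le> ereal (S + inner v x + c1)" by simp
            then show ?thesis using c1(2) True by (meson order_trans)
          qed
        qed
        moreover have "ereal (S + inner v x) < ereal (S + inner v x + c)" using c by simp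
        ultimately show "ereal (S + inner v x) < env x" by (rule order_less_le_trans[rotated])
      qed
      have UB: "env (M v) \<le> ereal (S + inner v (M v))"
      proof -
        have "env (M v) \<le> \<phi> (m v) + ereal (1/(2*r) * (norm (m v - M v))\<^sup>2)"
          unfolding env_def moreau_env_def by (rule INF_lower) simp
        also have "1/(2*r) * (norm (m v - M v))\<^sup>2 = r/2 * (norm v)\<^sup>2"
          unfolding M_def using r by (simp add: power2_eq_square field_simps)
        also have "\<phi> (m v) + ereal (r/2 * (norm v)\<^sup>2) = ereal (S + inner v (M v))"
          unfolding p S_def h0_def M_def using r by (simp add: inner_add_right power2_norm_eq_inner[symmetric] field_simps power2_eq_square)
        finally show ?thesis .
      qed
      have conv1: "ereal S \<le> env y - ereal (inner v y)" if "ereal (S + inner v y) \<le> env y" for y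
        using that by (cases "env y") auto
      have conv2: "ereal S < env y - ereal (inner v y)" if "ereal (S + inner v y) < env y" for y
        using that by (cases "env y") auto
      have conv3: "env (M v) - ereal (inner v (M v)) \<le> ereal S"
        using UB by (cases "env (M v)") auto
      show ?thesis
      proof (rule set_eqI, rule iffI)
        fix x assume xa: "x \<in> tilt_argmin env xb \<gamma>' v"
        then have xc: "x \<in> cball xb \<gamma>'" and "env x - ereal (inner v x) \<le> env (M v) - ereal (inner v (M v))"
          using Mc unfolding tilt_argmin_def by auto
        then have "\<not> ereal S < env x - ereal (inner v x)" using conv3 by auto
        then show "x \<in> {M v}" using conv2 SB[OF xc] by auto
      next
        fix x assume "x \<in> {M v}"
        then have x: "x = M v" by simp
        show "x \<in> tilt_argmin env xb \<gamma>' v" unfolding tilt_argmin_def x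
        proof (intro CollectI conjI ballI Mc)
          fix y assume "y \<in> cball xb \<gamma>'"
          then show "env (M v) - ereal (inner v (M v)) \<le> env y - ereal (inner v y)"
            using conv3 conv1[OF LB] by (meson order_trans)
        qed
      qed
    qed
    have \<gamma>'0: "\<gamma>' > 0" using R by (simp add: \<gamma>'_def)
    have M0: "M 0 = xb" using m0 by (simp add: M_def)
    show "tilt_stable (moreau_env r \<phi>) xb (\<kappa> + 2 * r)"
    proof -
      have A1: "tilt_argmin env xb \<gamma>' 0 = {xb}" using key[of 0] \<delta>'(1) M0 by simp
      have A2: "\<forall>v\<in>ball 0 \<delta>'. tilt_argmin env xb \<gamma>' v = {M v}" using key by blast
      have A3: "(\<kappa> + 2 * r)-lipschitz_on (ball 0 \<delta>') M"
      proof (rule lipschitz_onI)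
        fix u w :: 'a assume uw: "u \<in> ball 0 \<delta>'" "w \<in> ball 0 \<delta>'"
        then have uw': "u \<in> ball 0 \<delta>" "w \<in> ball 0 \<delta>" using \<delta>' by auto
        have "dist (M u) (M w) = norm ((m u - m w) + r *\<^sub>R (u - w))"
          unfolding M_def dist_norm by (simp add: algebra_simps)
        also have "\<dots> \<le> norm (m u - m w) + norm (r *\<^sub>R (u - w))"
          by (rule norm_triangle_ineq)
        also have "\<dots> = norm (m u - m w) + r * norm (u - w)" using r by simp
        also have "\<dots> \<le> \<kappa> * dist u w + r * dist u w"
          using lipschitz_onD[OF lip uw'] by (simp add: dist_norm)
        also have "\<dots> \<le> (\<kappa> + 2 * r) * dist u w" using r by (simp add: algebra_simps)
        finally show "dist (M u) (M w) \<le> (\<kappa> + 2 * r) * dist u w" .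
      next
        show "0 \<le> \<kappa> + 2 * r" using r assms(5) by simp
      qed
      show ?thesis unfolding tilt_stable_def env_def[symmetric] using A1 A2 A3 \<gamma>'0 \<delta>'(1) by blast
    qed
  qed
qed

end
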